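(* Let $H\subset Y$ be closed and $k\ge1$. Then $\mathcal R_n^f(H,Z,k)$ is open in $C(X,M)$ (with the source limitation topology) in each of the following cases: (i) $Z\subset M$ is closed and $X,Y$ are metric spaces; (ii) $Z=M$ and $X,Y$ are paracompact.
   Context: Let $(M,\rho)$ be a complete metric space, $Z\subset M$ closed, $n\ge0$, and $f\colon X\to Y$ a perfect surjection between paracompact spaces with $\dim f\le n$. For $H\subset Y$ and $k\ge1$, $\mathcal R_n^f(H,Z,k)$ is the set of $g\in C(X,M)$ such that for each $y\in H$ the set $g(f^{-1}(y))\cap Z$ can be covered by a family of open subsets of $M$ of mesh $\le1/k$ and order $\le n$ (every point of $M$ lies in at most $n+1$ members). The source limitation topology on $C(X,M)$ has as neighborhood base at $f$ the sets $\{g:\rho(g(x),f(x))<\varepsilon(x)\ \forall x\in X\}$, $\varepsilon\colon X\to(0,1]$ continuous. *)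

theory Defs
  imports "HOL-Analysis.Analysis"
begin

text \<open>Paracompact space (Engelking's convention: Hausdorff, and every open cover has a
  locally finite open refinement that still covers the space).\<close>
definition paracompact_space :: "'a topology \<Rightarrow> bool" where
  "paracompact_space X \<longleftrightarrow> Hausdorff_space X \<and>
     (\<forall>\<U>. (\<forall>U\<in>\<U>. openin X U) \<and> \<Union>\<U> = topspace X \<longrightarrow>
        (\<exists>\<V>. (\<forall>V\<in>\<V>. openin X V) \<and> \<Union>\<V> = topspace X \<and> locally_finite_in X \<V> \<and>
              (\<forall>V\<in>\<V>. \<exists>U\<in>\<U>. V \<subseteq> U)))"

definition order_le :: "'a set \<Rightarrow> 'a set set \<Rightarrow> nat \<Rightarrow> bool" where
  "order_le S \<V> n \<longleftrightarrow> (\<forall>p\<in>S. finite {V\<in>\<V>. p \<in> V} \<and> card {V\<in>\<V>. p \<in> V} \<le> n + 1)"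

definition covering_dim_le :: "'a topology \<Rightarrow> nat \<Rightarrow> bool" where
  "covering_dim_le X n \<longleftrightarrow>
     (\<forall>\<U>. finite \<U> \<and> (\<forall>U\<in>\<U>. openin X U) \<and> \<Union>\<U> = topspace X \<longrightarrow>
        (\<exists>\<V>. finite \<V> \<and> (\<forall>V\<in>\<V>. openin X V) \<and> \<Union>\<V> = topspace X \<and>
              (\<forall>V\<in>\<V>. \<exists>U\<in>\<U>. V \<subseteq> U) \<and> order_le (topspace X) \<V> n))"

definition map_dim_le :: "'a topology \<Rightarrow> 'b topology \<Rightarrow> ('a \<Rightarrow> 'b) \<Rightarrow> nat \<Rightarrow> bool" where
  "map_dim_le X Y f n \<longleftrightarrow>
     (\<forall>y\<in>topspace Y. covering_dim_le (subtopology X {x \<in> topspace X. f x = y}) n)"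

definition R_set :: "'a topology \<Rightarrow> ('a \<Rightarrow> 'b) \<Rightarrow> nat \<Rightarrow> 'b set \<Rightarrow> 'm::metric_space set
     \<Rightarrow> nat \<Rightarrow> ('a \<Rightarrow> 'm) set" where
  "R_set X f n H Z k =
     {g. continuous_map X euclidean g \<and>
         (\<forall>y\<in>H. \<exists>\<U>. (\<forall>U\<in>\<U>. open U) \<and>
              g ` {x \<in> topspace X. f x = y} \<inter> Z \<subseteq> \<Union>\<U> \<and>
              (\<forall>U\<in>\<U>. \<forall>a\<in>U. \<forall>b\<in>U. dist a b \<le> 1 / real k) \<and>
              order_le UNIV \<U> n)}"

text \<open>Openness in C(X,M) with respect to the source limitation topology.\<close>
definition sl_open :: "'a topology \<Rightarrow> ('a \<Rightarrow> 'm::metric_space) set \<Rightarrow> bool" where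
  "sl_open X \<G> \<longleftrightarrow> \<G> \<subseteq> {g. continuous_map X euclidean g} \<and>
     (\<forall>g\<in>\<G>. \<exists>\<epsilon>. continuous_map X euclidean \<epsilon> \<and> (\<forall>x\<in>topspace X. 0 < \<epsilon> x \<and> \<epsilon> x \<le> (1::real)) \<and>
        {h. continuous_map X euclidean h \<and> (\<forall>x\<in>topspace X. dist (h x) (g x) < \<epsilon> x)} \<subseteq> \<G>)"

end

theory Submission
  imports Defs
begin


lemma para_refine:
  assumes "paracompact_space X" "\<forall>U\<in>\<U>. openin X U" "\<Union>\<U> = topspace X"
  obtains \<V> where "\<forall>V\<in>\<V>. openin X V" "\<Union>\<V> = topspace X" "locally_finite_in X \<V>"
     "\<forall>V\<in>\<V>. \<exists>U\<in>\<U>. V \<subseteq> U"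
proof -
  have H: "\<forall>\<U>. (\<forall>U\<in>\<U>. openin X U) \<and> \<Union>\<U> = topspace X \<longrightarrow>
        (\<exists>\<V>. (\<forall>V\<in>\<V>. openin X V) \<and> \<Union>\<V> = topspace X \<and> locally_finite_in X \<V> \<and>
              (\<forall>V\<in>\<V>. \<exists>U\<in>\<U>. V \<subseteq> U))"
    using assms(1) unfolding paracompact_space_def by (rule conjunct2)
  have "\<exists>\<V>. (\<forall>V\<in>\<V>. openin X V) \<and> \<Union>\<V> = topspace X \<and> locally_finite_in X \<V> \<and>
              (\<forall>V\<in>\<V>. \<exists>U\<in>\<U>. V \<subseteq> U)"
    using H assms(2,3) by blast
  then obtain \<V> where "\<forall>V\<in>\<V>. openin X V" "\<Union>\<V> = topspace X" "locally_finite_in X \<V>"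
     "\<forall>V\<in>\<V>. \<exists>U\<in>\<U>. V \<subseteq> U" by blast
  then show ?thesis by (rule that)
qed

lemma para_sep:
  assumes P: "paracompact_space X" and A: "closedin X A" and B: "closedin X B"
    and H: "\<And>b. b \<in> B \<Longrightarrow> \<exists>U. openin X U \<and> b \<in> U \<and> disjnt A (X closure_of U)"
  shows "\<exists>G. openin X G \<and> B \<subseteq> G \<and> disjnt A (X closure_of G)"
proof -
  define \<U> where "\<U> = {U. openin X U \<and> disjnt A (X closure_of U)} \<union> {topspace X - B}"
  have Uo: "\<forall>U\<in>\<U>. openin X U" using B by (auto simp: \<U>_def)
  have Uc: "\<Union>\<U> = topspace X"
  proof
    show "\<Union>\<U> \<subseteq> topspace X" using Uo openin_subset by blast
    show "topspace X \<subseteq> \<Union>\<U>"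
    proof
      fix x assume x: "x \<in> topspace X"
      show "x \<in> \<Union>\<U>"
      proof (cases "x \<in> B")
        case True then obtain U where "openin X U" "x \<in> U" "disjnt A (X closure_of U)" using H by blast
        then show ?thesis by (auto simp: \<U>_def)
      next
        case False then show ?thesis using x by (auto simp: \<U>_def)
      qed
    qed
  qed
  obtain \<V> where Vo: "\<forall>V\<in>\<V>. openin X V" and Vc: "\<Union>\<V> = topspace X" and lf: "locally_finite_in X \<V>"
     and ref: "\<forall>V\<in>\<V>. \<exists>U\<in>\<U>. V \<subseteq> U"
    using para_refine[OF P Uo Uc] by blast
  define G where "G = \<Union>{V\<in>\<V>. V \<inter> B \<noteq> {}}"
  have "openin X G" using Vo by (auto simp: G_def)
  moreover have "B \<subseteq> G"
  proof
    fix b assume b: "b \<in> B"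
    have "b \<in> topspace X" using b closedin_subset[OF B] by blast
    then have "b \<in> \<Union>\<V>" using Vc by simp
    then obtain V where V: "V \<in> \<V>" "b \<in> V" by blast
    have "V \<in> {V\<in>\<V>. V \<inter> B \<noteq> {}}" using V b by blast
    then show "b \<in> G" unfolding G_def using V(2) by (rule UnionI)
  qed
  moreover have "disjnt A (X closure_of G)"
  proof -
    have lf2: "locally_finite_in X {V\<in>\<V>. V \<inter> B \<noteq> {}}" by (rule locally_finite_in_subset[OF lf]) auto
    have cG: "X closure_of G = \<Union>((\<lambda>S. X closure_of S) ` {V\<in>\<V>. V \<inter> B \<noteq> {}})"
      unfolding G_def using closure_of_locally_finite_Union[OF lf2] .
    have dV: "disjnt A (X closure_of V)" if vV: "V \<in> \<V>" "V \<inter> B \<noteq> {}" for V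
    proof -
      obtain U where U: "U \<in> \<U>" "V \<subseteq> U" using bspec[OF ref vV(1)] by blast
      have ne: "U \<noteq> topspace X - B"
      proof
        assume "U = topspace X - B"
        then have "V \<inter> B = {}" using U(2) by auto
        with vV(2) show False by simp
      qed
      have "disjnt A (X closure_of U)" using U(1) ne unfolding \<U>_def by simp
      then show ?thesis using closure_of_mono[OF U(2)] by (rule disjnt_subset2)
    qed
    have "disjnt A (\<Union>((\<lambda>S. X closure_of S) ` {V\<in>\<V>. V \<inter> B \<noteq> {}}))"
      using dV by (auto simp: disjnt_def)
    then show ?thesis using cG by simp
  qed
  ultimately show ?thesis by blast
qed

lemma para_regular:
  assumes P: "paracompact_space X" shows "regular_space X"
  unfolding regular_space_def
proof clarify
  fix C a assume C: "closedin X C" and a: "a \<in> topspace X" "a \<notin> C"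
  have Hs: "Hausdorff_space X" using P by (simp add: paracompact_space_def)
  have "\<exists>U. openin X U \<and> c \<in> U \<and> disjnt {a} (X closure_of U)" if "c \<in> C" for c
  proof -
    have "c \<in> topspace X" "c \<noteq> a" using that C a closedin_subset by auto
    then obtain U V where "openin X U" "openin X V" "c \<in> U" "a \<in> V" "disjnt U V"
      using Hs[unfolded Hausdorff_space_def, rule_format, of c a] a(1) by blast
    then have "a \<notin> X closure_of U" unfolding in_closure_of disjnt_def by blast
    then show ?thesis using \<open>openin X U\<close> \<open>c \<in> U\<close> by auto
  qed
  moreover have Ca: "closedin X {a}" using Hs a(1) by (rule closedin_Hausdorff_singleton)
  ultimately obtain G where G: "openin X G" "C \<subseteq> G" "disjnt {a} (X closure_of G)"
    using para_sep[OF P Ca C] by blast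
  show "\<exists>U V. openin X U \<and> openin X V \<and> a \<in> U \<and> C \<subseteq> V \<and> disjnt U V"
  proof (intro exI conjI)
    show "openin X (topspace X - X closure_of G)" by (simp add: openin_diff)
    show "a \<in> topspace X - X closure_of G" using a G(3) by (simp add: disjnt_def)
    have "G \<subseteq> X closure_of G" using closure_of_subset[OF openin_subset[OF G(1)]] .
    then show "disjnt (topspace X - X closure_of G) G" by (auto simp: disjnt_def)
    show "openin X G" by (rule G(1))
    show "C \<subseteq> G" by (rule G(2))
  qed
qed

lemma para_normal:
  assumes P: "paracompact_space X" shows "normal_space X"
  unfolding normal_space
proof clarify
  fix S T assume S: "closedin X S" and T: "closedin X T" and d: "disjnt S T"
  have R: "regular_space X" using para_regular[OF P] .
  have "\<exists>U. openin X U \<and> s \<in> U \<and> disjnt T (X closure_of U)" if "s \<in> S" for s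
  proof -
    have "s \<in> topspace X - T" using that d closedin_subset[OF S] by (auto simp: disjnt_def)
    then show ?thesis using R[unfolded regular_space, rule_format, of T s] T by blast
  qed
  then show "\<exists>U. openin X U \<and> S \<subseteq> U \<and> disjnt T (X closure_of U)"
    using para_sep[OF P T S] by blast
qed



lemma cont_Min1:
  assumes "finite S" "\<forall>V\<in>S. continuous_map Y euclideanreal (g V)"
  shows "continuous_map Y euclideanreal (\<lambda>z. Min (insert (1::real) ((\<lambda>V. g V z) ` S)))"
  using assms
proof (induction S rule: finite_induct)
  case empty
  then show ?case by simp
next
  case (insert a S)
  have eq: "Min (insert (1::real) ((\<lambda>V. g V z) ` insert a S)) = min (g a z) (Min (insert 1 ((\<lambda>V. g V z) ` S)))" for z
  proof -
    have "insert (1::real) ((\<lambda>V. g V z) ` insert a S) = insert (g a z) (insert 1 ((\<lambda>V. g V z) ` S))" by auto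
    then show ?thesis using insert(1) by (simp add: Min_insert)
  qed
  have c1: "continuous_map Y euclideanreal (g a)" using insert(4) by simp
  have c2: "continuous_map Y euclideanreal (\<lambda>z. Min (insert 1 ((\<lambda>V. g V z) ` S)))" using insert(3,4) by simp
  show ?case unfolding eq by (rule continuous_map_real_min[OF c1 c2])
qed

lemma para_eps:
  fixes c :: "'a set \<Rightarrow> real"
  assumes P: "paracompact_space Y" and Co: "\<forall>C\<in>\<C>. openin Y C" and Cc: "\<Union>\<C> = topspace Y"
    and c: "\<forall>C\<in>\<C>. 0 < c C \<and> c C \<le> 1"
  shows "\<exists>e. continuous_map Y euclideanreal e \<and>
           (\<forall>y\<in>topspace Y. 0 < e y \<and> e y \<le> 1 \<and> (\<exists>C\<in>\<C>. y \<in> C \<and> e y \<le> c C))"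
proof -
  have R: "regular_space Y" using P by (rule para_regular)
  have Nm: "normal_space Y" using P by (rule para_normal)
  obtain \<V> where Vo: "\<forall>V\<in>\<V>. openin Y V" and Vc: "\<Union>\<V> = topspace Y" and lf: "locally_finite_in Y \<V>"
     and ref: "\<forall>V\<in>\<V>. \<exists>C\<in>\<C>. V \<subseteq> C"
    using para_refine[OF P Co Cc] by blast
  have ref': "\<forall>V\<in>\<V>. \<exists>C. C \<in> \<C> \<and> V \<subseteq> C" using ref by blast
  obtain Cv where Cv: "\<forall>V\<in>\<V>. Cv V \<in> \<C> \<and> V \<subseteq> Cv V" using bchoice[OF ref'] by blast
  define d where "d V = c (Cv V)" for V
  have d: "0 < d V \<and> d V \<le> 1" if "V \<in> \<V>" for V
  proof -
    have "Cv V \<in> \<C>" using Cv that by blast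
    then show ?thesis using c unfolding d_def by blast
  qed
  define \<N> where "\<N> = {N. openin Y N \<and> (\<exists>V\<in>\<V>. Y closure_of N \<subseteq> V)}"
  have No: "\<forall>N\<in>\<N>. openin Y N" by (simp add: \<N>_def)
  have Nc: "\<Union>\<N> = topspace Y"
  proof
    show "\<Union>\<N> \<subseteq> topspace Y" using No openin_subset by (metis Union_least)
    show "topspace Y \<subseteq> \<Union>\<N>"
    proof
      fix y assume y: "y \<in> topspace Y"
      then have "y \<in> \<Union>\<V>" using Vc by simp
      then obtain V where V: "V \<in> \<V>" "y \<in> V" by blast
      have cl: "closedin Y (topspace Y - V)" using closedin_diff[OF closedin_topspace bspec[OF Vo V(1)]] .
      have mem: "y \<in> topspace Y - (topspace Y - V)" using y V by blast
      have "\<exists>U. openin Y U \<and> y \<in> U \<and> disjnt (topspace Y - V) (Y closure_of U)"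
        using R[unfolded regular_space, rule_format, OF conjI[OF cl mem]] .
      then obtain N where N: "openin Y N" "y \<in> N" "disjnt (topspace Y - V) (Y closure_of N)" by blast
      have "Y closure_of N \<subseteq> V" using N(3) closure_of_subset_topspace[of Y N] unfolding disjnt_def by blast
      then have "N \<in> \<N>" using N(1) V(1) unfolding \<N>_def by blast
      then show "y \<in> \<Union>\<N>" using N(2) by (rule UnionI)
    qed
  qed
  obtain \<W> where Wo: "\<forall>W\<in>\<W>. openin Y W" and Wc: "\<Union>\<W> = topspace Y" and lfW: "locally_finite_in Y \<W>"
     and refW: "\<forall>W\<in>\<W>. \<exists>N\<in>\<N>. W \<subseteq> N"
    using para_refine[OF P No Nc] by blast
  define T where "T V = Y closure_of \<Union>{W\<in>\<W>. Y closure_of W \<subseteq> V}" for V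
  have Tcl: "closedin Y (T V)" for V by (simp add: T_def)
  have TV: "T V \<subseteq> V" for V
  proof -
    have lf2: "locally_finite_in Y {W\<in>\<W>. Y closure_of W \<subseteq> V}" by (rule locally_finite_in_subset[OF lfW]) auto
    have "T V = \<Union>((\<lambda>S. Y closure_of S) ` {W\<in>\<W>. Y closure_of W \<subseteq> V})"
      unfolding T_def by (rule closure_of_locally_finite_Union[OF lf2])
    also have "\<dots> \<subseteq> V" by (rule UN_least) simp
    finally show ?thesis .
  qed
  have Tc: "\<exists>V\<in>\<V>. y \<in> T V" if y: "y \<in> topspace Y" for y
  proof -
    have "y \<in> \<Union>\<W>" using Wc y by simp
    then obtain W where W: "W \<in> \<W>" "y \<in> W" by blast
    obtain N where N: "N \<in> \<N>" "W \<subseteq> N" using bspec[OF refW W(1)] by blast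
    obtain V where V: "V \<in> \<V>" "Y closure_of N \<subseteq> V" using N(1) unfolding \<N>_def by blast
    have "Y closure_of W \<subseteq> V" using closure_of_mono[OF N(2)] V(2) by (rule order_trans)
    then have "W \<in> {W\<in>\<W>. Y closure_of W \<subseteq> V}" using W(1) by blast
    then have yin: "y \<in> \<Union>{W\<in>\<W>. Y closure_of W \<subseteq> V}" using W(2) by (rule UnionI)
    have sub: "\<Union>{W\<in>\<W>. Y closure_of W \<subseteq> V} \<subseteq> topspace Y" using Wc by blast
    have "y \<in> T V" unfolding T_def using closure_of_subset[OF sub] yin by blast
    then show ?thesis using V(1) by blast
  qed
  have "\<forall>V\<in>\<V>. \<exists>F. continuous_map Y (top_of_set {d V..1}) F \<and> F ` T V \<subseteq> {d V} \<and> F ` (topspace Y - V) \<subseteq> {1}"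
  proof
    fix V assume V: "V \<in> \<V>"
    have cl: "closedin Y (topspace Y - V)" using closedin_diff[OF closedin_topspace bspec[OF Vo V]] .
    have dj: "disjnt (T V) (topspace Y - V)" using TV[of V] unfolding disjnt_def by blast
    have le: "d V \<le> 1" using d[OF V] by simp
    obtain F where "continuous_map Y (top_of_set {d V..1}) F" "F ` T V \<subseteq> {d V}" "F ` (topspace Y - V) \<subseteq> {1}"
      using Urysohn_lemma[OF Nm Tcl cl dj le] by blast
    then show "\<exists>F. continuous_map Y (top_of_set {d V..1}) F \<and> F ` T V \<subseteq> {d V} \<and> F ` (topspace Y - V) \<subseteq> {1}" by blast
  qed
  then have "\<exists>Fn. \<forall>V\<in>\<V>. continuous_map Y (top_of_set {d V..1}) (Fn V) \<and> Fn V ` T V \<subseteq> {d V} \<and> Fn V ` (topspace Y - V) \<subseteq> {1}"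
    by (rule bchoice)
  then obtain Fn where Fn: "\<forall>V\<in>\<V>. continuous_map Y (top_of_set {d V..1}) (Fn V) \<and> Fn V ` T V \<subseteq> {d V} \<and> Fn V ` (topspace Y - V) \<subseteq> {1}"
    by blast
  have Fc: "continuous_map Y euclideanreal (Fn V)" if "V \<in> \<V>" for V
  proof -
    have "continuous_map Y (top_of_set {d V..1}) (Fn V)" using Fn that by blast
    then show ?thesis by (rule continuous_map_into_fulltopology)
  qed
  have Fr: "d V \<le> Fn V y \<and> Fn V y \<le> 1" if "V \<in> \<V>" "y \<in> topspace Y" for V y
  proof -
    have "continuous_map Y (top_of_set {d V..1}) (Fn V)" using Fn that(1) by blast
    then have "Fn V y \<in> {d V..1}" using that(2) unfolding continuous_map_in_subtopology by auto
    then show ?thesis by simp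
  qed
  have FT: "Fn V y = d V" if "V \<in> \<V>" "y \<in> T V" for V y
  proof -
    have "Fn V ` T V \<subseteq> {d V}" using Fn that(1) by blast
    then show ?thesis using that(2) by blast
  qed
  have F1: "Fn V y = 1" if "V \<in> \<V>" "y \<in> topspace Y" "y \<notin> V" for V y
  proof -
    have "Fn V ` (topspace Y - V) \<subseteq> {1}" using Fn that(1) by blast
    then show ?thesis using that(2,3) by blast
  qed
  have lfx: "\<forall>x\<in>topspace Y. \<exists>Ob. openin Y Ob \<and> x \<in> Ob \<and> finite {V\<in>\<V>. V \<inter> Ob \<noteq> {}}"
    using lf unfolding locally_finite_in_def by (rule conjunct2)
  define e where "e y = Min (insert 1 ((\<lambda>V. Fn V y) ` {V\<in>\<V>. y \<in> V}))" for y
  have fin: "finite {V\<in>\<V>. y \<in> V}" if yt: "y \<in> topspace Y" for y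
  proof -
    obtain Ob where Ob: "openin Y Ob" "y \<in> Ob" "finite {V\<in>\<V>. V \<inter> Ob \<noteq> {}}"
      using bspec[OF lfx yt] by blast
    have "{V\<in>\<V>. y \<in> V} \<subseteq> {V\<in>\<V>. V \<inter> Ob \<noteq> {}}" using Ob(2) by blast
    then show ?thesis using Ob(3) by (rule finite_subset)
  qed
  have e1: "e y \<le> 1" if "y \<in> topspace Y" for y
    unfolding e_def using fin[OF that] by simp
  have e0: "0 < e y" if y: "y \<in> topspace Y" for y
  proof -
    have "\<forall>a\<in>insert 1 ((\<lambda>V. Fn V y) ` {V\<in>\<V>. y \<in> V}). 0 < a"
    proof
      fix a assume "a \<in> insert 1 ((\<lambda>V. Fn V y) ` {V\<in>\<V>. y \<in> V})"
      then consider "a = 1" | V where "V \<in> \<V>" "a = Fn V y" by blast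
      then show "0 < a"
      proof cases
        case 1 then show ?thesis by simp
      next
        case 2
        have "0 < d V" using d[OF 2(1)] by simp
        also have "d V \<le> Fn V y" using Fr[OF 2(1) y] by simp
        finally show ?thesis using 2(2) by simp
      qed
    qed
    then show ?thesis unfolding e_def using fin[OF y] by simp
  qed
  have eC: "\<exists>C\<in>\<C>. y \<in> C \<and> e y \<le> c C" if y: "y \<in> topspace Y" for y
  proof -
    obtain V where V: "V \<in> \<V>" "y \<in> T V" using Tc[OF y] by blast
    have yV: "y \<in> V" using TV V(2) by blast
    have "e y \<le> Fn V y" unfolding e_def using fin[OF y] V(1) yV by simp
    also have "\<dots> = c (Cv V)" using FT[OF V] by (simp add: d_def)
    finally have "e y \<le> c (Cv V)" .
    moreover have "Cv V \<in> \<C>" "y \<in> Cv V" using Cv V(1) yV by blast+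
    ultimately show ?thesis by blast
  qed
  have econt: "continuous_map Y euclideanreal e"
    unfolding continuous_map
  proof (intro conjI allI impI)
    show "e ` topspace Y \<subseteq> topspace euclideanreal" by simp
    fix U :: "real set" assume U: "openin euclideanreal U"
    show "openin Y {x \<in> topspace Y. e x \<in> U}"
    proof (subst openin_subopen, intro ballI)
      fix y assume yU: "y \<in> {x \<in> topspace Y. e x \<in> U}"
      then have y: "y \<in> topspace Y" by blast
      obtain Ob where Ob: "openin Y Ob" "y \<in> Ob" and finO: "finite {V\<in>\<V>. V \<inter> Ob \<noteq> {}}"
        using bspec[OF lfx y] by blast
      define FO where "FO = {V\<in>\<V>. V \<inter> Ob \<noteq> {}}"
      define eO where "eO z = Min (insert 1 ((\<lambda>V. Fn V z) ` FO))" for z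
      have cO: "continuous_map Y euclideanreal eO"
        unfolding eO_def
      proof (rule cont_Min1)
        show "finite FO" using finO by (simp add: FO_def)
        show "\<forall>V\<in>FO. continuous_map Y euclideanreal (Fn V)" using Fc unfolding FO_def by blast
      qed
      have eq: "e z = eO z" if z: "z \<in> Ob" for z
      proof -
        have zt: "z \<in> topspace Y" using openin_subset[OF Ob(1)] z by blast
        have "insert 1 ((\<lambda>V. Fn V z) ` {V\<in>\<V>. z \<in> V}) = insert 1 ((\<lambda>V. Fn V z) ` FO)"
        proof
          have "{V\<in>\<V>. z \<in> V} \<subseteq> FO" using z unfolding FO_def by blast
          then show "insert 1 ((\<lambda>V. Fn V z) ` {V\<in>\<V>. z \<in> V}) \<subseteq> insert 1 ((\<lambda>V. Fn V z) ` FO)" by blast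
          show "insert 1 ((\<lambda>V. Fn V z) ` FO) \<subseteq> insert 1 ((\<lambda>V. Fn V z) ` {V\<in>\<V>. z \<in> V})"
          proof
            fix a assume "a \<in> insert 1 ((\<lambda>V. Fn V z) ` FO)"
            then consider "a = 1" | V where "V \<in> FO" "a = Fn V z" by blast
            then show "a \<in> insert 1 ((\<lambda>V. Fn V z) ` {V\<in>\<V>. z \<in> V})"
            proof cases
              case 1 then show ?thesis by simp
            next
              case 2
              have V: "V \<in> \<V>" using 2(1) unfolding FO_def by blast
              show ?thesis
              proof (cases "z \<in> V")
                case True then show ?thesis using V 2(2) by blast
              next
                case False then have "a = 1" using F1[OF V zt] 2(2) by simp
                then show ?thesis by simp
              qed
            qed
          qed
        qed
        then show ?thesis unfolding e_def eO_def by simp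
      qed
      have op: "openin Y {x \<in> topspace Y. eO x \<in> U}" using cO U unfolding continuous_map by blast
      show "\<exists>T. openin Y T \<and> y \<in> T \<and> T \<subseteq> {x \<in> topspace Y. e x \<in> U}"
      proof (intro exI conjI)
        show "openin Y (Ob \<inter> {x \<in> topspace Y. eO x \<in> U})" using Ob(1) op by (rule openin_Int)
        show "y \<in> Ob \<inter> {x \<in> topspace Y. eO x \<in> U}" using Ob(2) yU eq[OF Ob(2)] by simp
        show "Ob \<inter> {x \<in> topspace Y. eO x \<in> U} \<subseteq> {x \<in> topspace Y. e x \<in> U}" using eq by auto
      qed
    qed
  qed
  show ?thesis
  proof (intro exI conjI ballI)
    show "continuous_map Y euclideanreal e" by (rule econt)
  qed (simp_all add: e0 e1 eC)
qed





lemma delta_lemma: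
  fixes A Z W :: "'m::metric_space set"
  assumes A: "compact A" and Z: "closed Z" and W: "open W" and sub: "A \<inter> Z \<subseteq> W"
  shows "\<exists>\<delta>>0. \<forall>a\<in>A. \<forall>z\<in>Z. dist z a < \<delta> \<longrightarrow> z \<in> W"
proof (cases "A = {} \<or> Z - W = {}")
  case True
  then show ?thesis by (intro exI[of _ 1]) auto
next
  case False
  then have An: "A \<noteq> {}" and Dn: "Z - W \<noteq> {}" by auto
  have Dc: "closed (Z - W)" using Z W by (simp add: closed_Diff)
  have cont: "continuous_on A (\<lambda>a. infdist a (Z - W))"
    by (intro continuous_on_infdist continuous_on_id)
  obtain a0 where a0: "a0 \<in> A" and min: "\<forall>a\<in>A. infdist a0 (Z - W) \<le> infdist a (Z - W)"
    using continuous_attains_inf[OF A An cont] by blast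
  have "a0 \<notin> Z - W" using a0 sub by blast
  then have pos: "0 < infdist a0 (Z - W)" using infdist_pos_not_in_closed[OF Dc Dn] by blast
  show ?thesis
  proof (intro exI[of _ "infdist a0 (Z - W)"] conjI ballI impI)
    show "0 < infdist a0 (Z - W)" by (rule pos)
    fix a z assume a: "a \<in> A" and z: "z \<in> Z" and d: "dist z a < infdist a0 (Z - W)"
    show "z \<in> W"
    proof (rule ccontr)
      assume "z \<notin> W"
      then have "z \<in> Z - W" using z by blast
      then have "infdist a (Z - W) \<le> dist a z" by (rule infdist_le)
      also have "\<dots> < infdist a0 (Z - W)" using d by (simp add: dist_commute)
      also have "\<dots> \<le> infdist a (Z - W)" using min a by blast
      finally show False by simp
    qed
  qed
qed

lemma main_open:
  fixes X :: "'a topology" and Y :: "'b topology" and f :: "'a \<Rightarrow> 'b"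
    and Z :: "'m::metric_space set" and H :: "'b set" and n k :: nat
  assumes PY: "paracompact_space Y" and pf: "perfect_map X Y f"
    and Z: "closed Z" and H: "closedin Y H"
  shows "sl_open X (R_set X f n H Z k)"
  unfolding sl_open_def
proof (intro conjI ballI)
  show "R_set X f n H Z k \<subseteq> {g. continuous_map X euclidean g}" unfolding R_set_def by blast
  fix g assume g: "g \<in> R_set X f n H Z k"
  have gc: "continuous_map X euclidean g" using g unfolding R_set_def by blast
  have fc: "continuous_map X Y f" using pf unfolding perfect_map_def by blast
  have pm: "proper_map X Y f" using pf unfolding perfect_map_def by blast
  have cm: "closed_map X Y f" using pm unfolding proper_map_def by blast
  have fib: "compactin X {x \<in> topspace X. f x = y}" if "y \<in> topspace Y" for y
    using pm that unfolding proper_map_def by blast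
  have HY: "H \<subseteq> topspace Y" using H by (rule closedin_subset)
  define A where "A y = g ` {x \<in> topspace X. f x = y}" for y
  have Acomp: "compact (A y)" if "y \<in> H" for y
  proof -
    have "compactin euclidean (A y)" unfolding A_def
      using image_compactin[OF fib gc] that HY by blast
    then show ?thesis by simp
  qed
  have "\<forall>y\<in>H. \<exists>\<U>. (\<forall>U\<in>\<U>. open U) \<and> A y \<inter> Z \<subseteq> \<Union>\<U> \<and>
              (\<forall>U\<in>\<U>. \<forall>a\<in>U. \<forall>b\<in>U. dist a b \<le> 1 / real k) \<and> order_le UNIV \<U> n"
    using g unfolding R_set_def A_def by blast
  then have "\<exists>Uf. \<forall>y\<in>H. (\<forall>U\<in>Uf y. open U) \<and> A y \<inter> Z \<subseteq> \<Union>(Uf y) \<and>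
              (\<forall>U\<in>Uf y. \<forall>a\<in>U. \<forall>b\<in>U. dist a b \<le> 1 / real k) \<and> order_le UNIV (Uf y) n"
    by (rule bchoice)
  then obtain Uf where Uf: "\<forall>y\<in>H. (\<forall>U\<in>Uf y. open U) \<and> A y \<inter> Z \<subseteq> \<Union>(Uf y) \<and>
              (\<forall>U\<in>Uf y. \<forall>a\<in>U. \<forall>b\<in>U. dist a b \<le> 1 / real k) \<and> order_le UNIV (Uf y) n"
    by blast
  have "\<forall>y\<in>H. \<exists>\<delta>. \<delta> > 0 \<and> (\<forall>a\<in>A y. \<forall>z\<in>Z. dist z a < \<delta> \<longrightarrow> z \<in> \<Union>(Uf y))"
  proof
    fix y assume y: "y \<in> H"
    have "open (\<Union>(Uf y))" using Uf y by blast
    moreover have "A y \<inter> Z \<subseteq> \<Union>(Uf y)" using Uf y by blast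
    ultimately have "\<exists>\<delta>>0. \<forall>a\<in>A y. \<forall>z\<in>Z. dist z a < \<delta> \<longrightarrow> z \<in> \<Union>(Uf y)"
      using delta_lemma[OF Acomp[OF y] Z] by blast
    then show "\<exists>\<delta>. \<delta> > 0 \<and> (\<forall>a\<in>A y. \<forall>z\<in>Z. dist z a < \<delta> \<longrightarrow> z \<in> \<Union>(Uf y))" by blast
  qed
  then have "\<exists>\<delta>. \<forall>y\<in>H. \<delta> y > 0 \<and> (\<forall>a\<in>A y. \<forall>z\<in>Z. dist z a < \<delta> y \<longrightarrow> z \<in> \<Union>(Uf y))"
    by (rule bchoice)
  then obtain \<delta> where \<delta>: "\<forall>y\<in>H. \<delta> y > 0 \<and> (\<forall>a\<in>A y. \<forall>z\<in>Z. dist z a < \<delta> y \<longrightarrow> z \<in> \<Union>(Uf y))"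
    by blast
  define Vs where "Vs y = {x \<in> topspace X. g x \<in> (\<Union>a\<in>A y. ball a (\<delta> y / 2))}" for y
  have Vso: "openin X (Vs y)" for y
    unfolding Vs_def by (rule openin_continuous_map_preimage[OF gc]) auto
  define Oy where "Oy y = topspace Y - f ` (topspace X - Vs y)" for y
  have Oyo: "openin Y (Oy y)" for y
  proof -
    have "closedin X (topspace X - Vs y)" using Vso by (simp add: closedin_diff)
    then have "closedin Y (f ` (topspace X - Vs y))" using cm unfolding closed_map_def by blast
    then show ?thesis unfolding Oy_def by (simp add: openin_diff)
  qed
  have Oyy: "y \<in> Oy y" if y: "y \<in> H" for y
  proof -
    have "y \<notin> f ` (topspace X - Vs y)"
    proof
      assume "y \<in> f ` (topspace X - Vs y)"
      then obtain x where x: "x \<in> topspace X" "x \<notin> Vs y" "f x = y" by blast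
      have "g x \<in> A y" unfolding A_def using x by blast
      moreover have "0 < \<delta> y" using \<delta> y by blast
      ultimately have "x \<in> Vs y" unfolding Vs_def using x(1) by force
      then show False using x(2) by blast
    qed
    then show ?thesis unfolding Oy_def using y HY by blast
  qed
  have OyV: "x \<in> Vs y" if "x \<in> topspace X" "f x \<in> Oy y" for x y
    using that unfolding Oy_def by blast
  define \<C> where "\<C> = Oy ` H \<union> {topspace Y - H}"
  define c where "c C = (if C \<in> Oy ` H then min 1 (\<delta> (SOME y. y \<in> H \<and> C = Oy y) / 2) else 1)" for C
  have Co: "\<forall>C\<in>\<C>. openin Y C"
  proof
    fix C assume "C \<in> \<C>"
    then consider "C \<in> Oy ` H" | "C = topspace Y - H" unfolding \<C>_def by blast
    then show "openin Y C"
    proof cases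
      case 1 then show ?thesis using Oyo by blast
    next
      case 2 then show ?thesis using H by (simp add: openin_diff)
    qed
  qed
  have Cc: "\<Union>\<C> = topspace Y"
  proof
    show "\<Union>\<C> \<subseteq> topspace Y" using Co openin_subset by (metis Union_least)
    show "topspace Y \<subseteq> \<Union>\<C>"
    proof
      fix y assume y: "y \<in> topspace Y"
      show "y \<in> \<Union>\<C>"
      proof (cases "y \<in> H")
        case True
        then have "Oy y \<in> \<C>" unfolding \<C>_def by blast
        then show ?thesis using Oyy[OF True] by (rule UnionI)
      next
        case False
        then have "y \<in> topspace Y - H" using y by blast
        moreover have "topspace Y - H \<in> \<C>" unfolding \<C>_def by blast
        ultimately show ?thesis by blast
      qed
    qed
  qed
  have cpos: "\<forall>C\<in>\<C>. 0 < c C \<and> c C \<le> 1"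
  proof
    fix C assume C: "C \<in> \<C>"
    show "0 < c C \<and> c C \<le> 1"
    proof (cases "C \<in> Oy ` H")
      case True
      then have "\<exists>y. y \<in> H \<and> C = Oy y" by blast
      then have s: "(SOME y. y \<in> H \<and> C = Oy y) \<in> H" by (rule someI2_ex) blast
      then have "0 < \<delta> (SOME y. y \<in> H \<and> C = Oy y)" using \<delta> by blast
      then show ?thesis using True unfolding c_def by simp
    next
      case False then show ?thesis unfolding c_def by simp
    qed
  qed
  obtain e where econt: "continuous_map Y euclideanreal e"
      and eprop: "\<forall>y\<in>topspace Y. 0 < e y \<and> e y \<le> 1 \<and> (\<exists>C\<in>\<C>. y \<in> C \<and> e y \<le> c C)"
    using para_eps[OF PY Co Cc cpos] by blast
  show "\<exists>\<epsilon>. continuous_map X euclidean \<epsilon> \<and> (\<forall>x\<in>topspace X. 0 < \<epsilon> x \<and> \<epsilon> x \<le> 1) \<and>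
          {h. continuous_map X euclidean h \<and> (\<forall>x\<in>topspace X. dist (h x) (g x) < \<epsilon> x)} \<subseteq> R_set X f n H Z k"
  proof (intro exI conjI)
    show "continuous_map X euclidean (e \<circ> f)" using fc econt by (rule continuous_map_compose)
    have fY: "f x \<in> topspace Y" if "x \<in> topspace X" for x
      using fc that by (simp add: continuous_map_def Pi_iff)
    show "\<forall>x\<in>topspace X. 0 < (e \<circ> f) x \<and> (e \<circ> f) x \<le> 1"
      using eprop fY by simp
    show "{h. continuous_map X euclidean h \<and> (\<forall>x\<in>topspace X. dist (h x) (g x) < (e \<circ> f) x)} \<subseteq> R_set X f n H Z k"
    proof
      fix h assume "h \<in> {h. continuous_map X euclidean h \<and> (\<forall>x\<in>topspace X. dist (h x) (g x) < (e \<circ> f) x)}"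
      then have hc: "continuous_map X euclidean h" and hd: "\<forall>x\<in>topspace X. dist (h x) (g x) < e (f x)" by auto
      have "\<exists>\<U>. (\<forall>U\<in>\<U>. open U) \<and> h ` {x \<in> topspace X. f x = y'} \<inter> Z \<subseteq> \<Union>\<U> \<and>
              (\<forall>U\<in>\<U>. \<forall>a\<in>U. \<forall>b\<in>U. dist a b \<le> 1 / real k) \<and> order_le UNIV \<U> n" if y': "y' \<in> H" for y'
      proof -
        have y'Y: "y' \<in> topspace Y" using y' HY by blast
        obtain C where C: "C \<in> \<C>" "y' \<in> C" "e y' \<le> c C" using eprop y'Y by blast
        have "C \<noteq> topspace Y - H" using C(2) y' by blast
        then have CO: "C \<in> Oy ` H" using C(1) unfolding \<C>_def by blast
        then have "\<exists>y. y \<in> H \<and> C = Oy y" by blast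
        then have y0: "(SOME y. y \<in> H \<and> C = Oy y) \<in> H \<and> C = Oy (SOME y. y \<in> H \<and> C = Oy y)"
          by (rule someI_ex)
        define y0 where "y0 = (SOME y. y \<in> H \<and> C = Oy y)"
        have y0H: "y0 \<in> H" and Cy0: "C = Oy y0" using y0 unfolding y0_def by blast+
        have ce: "e y' \<le> \<delta> y0 / 2" using C(3) CO unfolding c_def y0_def[symmetric] by simp
        have Uy0: "(\<forall>U\<in>Uf y0. open U) \<and> (\<forall>U\<in>Uf y0. \<forall>a\<in>U. \<forall>b\<in>U. dist a b \<le> 1 / real k) \<and> order_le UNIV (Uf y0) n"
          using Uf y0H by blast
        have dy0: "\<forall>a\<in>A y0. \<forall>z\<in>Z. dist z a < \<delta> y0 \<longrightarrow> z \<in> \<Union>(Uf y0)" using \<delta> y0H by blast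
        have cov: "h ` {x \<in> topspace X. f x = y'} \<inter> Z \<subseteq> \<Union>(Uf y0)"
        proof
          fix z assume "z \<in> h ` {x \<in> topspace X. f x = y'} \<inter> Z"
          then obtain x where x: "x \<in> topspace X" "f x = y'" "z = h x" and zZ: "z \<in> Z" by blast
          have "f x \<in> Oy y0" using x(2) C(2) Cy0 by simp
          then have "x \<in> Vs y0" using OyV x(1) by blast
          then obtain a where a: "a \<in> A y0" "dist a (g x) < \<delta> y0 / 2" unfolding Vs_def by auto
          have "dist z a \<le> dist (h x) (g x) + dist a (g x)" using x(3) by (simp add: dist_triangle2)
          also have "\<dots> < \<delta> y0" using hd x(1) x(2) ce a(2) by fastforce
          finally have "dist z a < \<delta> y0" .
          then show "z \<in> \<Union>(Uf y0)" using dy0 a(1) zZ by blast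
        qed
        show ?thesis using Uy0 cov by blast
      qed
      then show "h \<in> R_set X f n H Z k" unfolding R_set_def using hc by blast
    qed
  qed
qed

theorem lemma2p3:
  fixes X :: "'a topology" and Y :: "'b topology" and f :: "'a \<Rightarrow> 'b"
    and Z :: "'m::{metric_space,complete_space} set" and H :: "'b set" and n k :: nat
  assumes "paracompact_space X" and "paracompact_space Y"
    and "perfect_map X Y f" and "map_dim_le X Y f n"
    and "closed Z"
    and "closedin Y H" and "k \<ge> 1"
  shows "(metrizable_space X \<and> metrizable_space Y \<longrightarrow> sl_open X (R_set X f n H Z k))
       \<and> (Z = UNIV \<longrightarrow> sl_open X (R_set X f n H Z k))"
proof -
  have m: "sl_open X (R_set X f n H Z k)" by (rule main_open[OF assms(2,3,5,6)])
  show ?thesis by (intro conjI impI) (rule m)+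
qed


end
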